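(* Let $L$ be a pentagonal linkage with positive charges $q_1,\dots,q_5>0$ at the vertices and effective Coulomb potential $E=\frac{q_2q_5}{b_1}+\frac{q_1q_3}{b_2}+\frac{q_2q_4}{b_3}+\frac{q_3q_5}{b_4}+\frac{q_1q_4}{b_5}$. Let $X_k=\{P\in\overline{M^C}(L): b_4=k\}$ be a slice, parameterized on its relative interior by $x_2$. Then $\frac{d^2}{dx_2^2}\big(E|_{X_k}\big)>0$ on the relative interior of $X_k$.
   Context: A pentagonal linkage $L$ is given by side lengths $a_1,\dots,a_5>0$; $M(L)$ is the set of planar 5-gons $(A_1,\dots,A_5)$ with $|A_iA_{i+1}|=a_i$ (indices mod 5) modulo all isometries of $\mathbb{R}^2$; $M^C(L)$ is the set of strictly convex configurations (convex pentagon $A_1\dots A_5$ in this cyclic order, no angle equal to $\pi$) and $\overline{M^C}(L)$ its closure. $b_i=|A_{i-1}A_{i+1}|$, $x_i=b_i^2$ (indices mod 5). *)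

theory Defs
  imports "HOL-Analysis.Analysis"
begin

text \<open>A planar pentagon is a point of complex^5 (the plane is identified with the
complex numbers); index type 5 gives arithmetic mod 5, and the paper's vertex
A_i is A $ i, so A $ 5 = A $ 0.  Side lengths and charges are functions 5 => real.
All quantities below are invariant under isometries, so configurations are
handled by representatives rather than isometry classes.\<close>

type_synonym pentagon = "complex ^ 5"

definition cross :: "complex \<Rightarrow> complex \<Rightarrow> real" where
  "cross z w = Im (cnj z * w)"

definition has_sides :: "(5 \<Rightarrow> real) \<Rightarrow> pentagon \<Rightarrow> bool" where
  "has_sides a A \<longleftrightarrow> (\<forall>i::5. dist (A $ i) (A $ (i + 1)) = a i)"

definition strictly_convex :: "pentagon \<Rightarrow> bool" where
  "strictly_convex A \<longleftrightarrow>
     (\<forall>i j::5. j \<noteq> i \<and> j \<noteq> i + 1 \<longrightarrow> cross (A $ (i + 1) - A $ i) (A $ j - A $ i) > 0)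
   \<or> (\<forall>i j::5. j \<noteq> i \<and> j \<noteq> i + 1 \<longrightarrow> cross (A $ (i + 1) - A $ i) (A $ j - A $ i) < 0)"

definition MC :: "(5 \<Rightarrow> real) \<Rightarrow> pentagon set" where
  "MC a = {A. has_sides a A \<and> strictly_convex A}"

definition MC_closure :: "(5 \<Rightarrow> real) \<Rightarrow> pentagon set" where
  "MC_closure a = closure (MC a)"

definition diag :: "pentagon \<Rightarrow> 5 \<Rightarrow> real" where
  "diag A i = dist (A $ (i - 1)) (A $ (i + 1))"

definition xdiag :: "pentagon \<Rightarrow> 5 \<Rightarrow> real" where
  "xdiag A i = (diag A i)\<^sup>2"

definition energy :: "(5 \<Rightarrow> real) \<Rightarrow> pentagon \<Rightarrow> real" where
  "energy q A =
     q 2 * q 5 / diag A 1 + q 1 * q 3 / diag A 2 + q 2 * q 4 / diag A 3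
   + q 3 * q 5 / diag A 4 + q 1 * q 4 / diag A 5"

definition slice :: "(5 \<Rightarrow> real) \<Rightarrow> real \<Rightarrow> pentagon set" where
  "slice a k = {A \<in> MC_closure a. diag A 4 = k}"

definition slice_energy :: "(5 \<Rightarrow> real) \<Rightarrow> (5 \<Rightarrow> real) \<Rightarrow> real \<Rightarrow> real \<Rightarrow> real" where
  "slice_energy a q k t = energy q (SOME A. A \<in> slice a k \<and> xdiag A 2 = t)"

definition slice_param_interior :: "(5 \<Rightarrow> real) \<Rightarrow> real \<Rightarrow> real set" where
  "slice_param_interior a k = interior ((\<lambda>A. xdiag A 2) ` slice a k)"

end

theory Submission
  imports Defs
begin

definition mm :: "real \<Rightarrow> real \<Rightarrow> real \<Rightarrow> real" where
  "mm x y t = x^2 + t - y^2"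
definition DD :: "real \<Rightarrow> real \<Rightarrow> real \<Rightarrow> real" where
  "DD x y t = 4*x^2*t - (mm x y t)^2"
definition SS :: "real \<Rightarrow> real \<Rightarrow> real \<Rightarrow> real" where
  "SS x y t = sqrt (DD x y t)"

lemma DERIV_eqI: "(f has_real_derivative a) F \<Longrightarrow> a = b \<Longrightarrow> (f has_real_derivative b) F"
  by simp

lemma DD_sym: "DD x y t = DD y x t"
  unfolding DD_def mm_def by (simp add: algebra_simps power2_eq_square)

lemma SS_sq: "DD x y t > 0 \<Longrightarrow> (SS x y t)^2 = DD x y t"
  unfolding SS_def by simp

lemma SS_pos: "DD x y t > 0 \<Longrightarrow> SS x y t > 0"
  unfolding SS_def by simp

lemma DD_deriv: "(DD x y has_real_derivative 2*(x^2+y^2-t)) (at t)"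
proof -
  have "(DD x y has_real_derivative 4*x^2 - 2*(mm x y t)*1) (at t)"
    unfolding DD_def mm_def
    by (auto intro!: derivative_eq_intros)
  then show ?thesis by (simp add: mm_def algebra_simps)
qed

lemma SS_deriv:
  assumes "DD x y t > 0"
  shows "(SS x y has_real_derivative (x^2+y^2-t) / SS x y t) (at t)"
proof -
  have "((\<lambda>t. sqrt (DD x y t)) has_real_derivative inverse (sqrt (DD x y t)) / 2 * (2*(x^2+y^2-t))) (at t)"
    by (rule DERIV_chain2[OF DERIV_real_sqrt[OF assms] DD_deriv])
  moreover have "inverse (sqrt (DD x y t)) / 2 * (2*(x^2+y^2-t)) = (x^2+y^2-t) / SS x y t"
    unfolding SS_def using assms by (simp add: field_simps)
  ultimately show ?thesis unfolding SS_def by metis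
qed

lemma cot_deriv:
  assumes "DD x y t > 0"
  shows "((\<lambda>t. mm x y t / SS x y t) has_real_derivative 2*x^2*mm y x t / (SS x y t)^3) (at t)"
proof -
  have S: "SS x y t > 0" using SS_pos[OF assms] .
  have m: "(mm x y has_real_derivative 1) (at t)" unfolding mm_def
    by (auto intro!: derivative_eq_intros)
  have "((\<lambda>t. mm x y t / SS x y t) has_real_derivative
      (1 * SS x y t - mm x y t * ((x^2+y^2-t) / SS x y t)) / (SS x y t * SS x y t)) (at t)"
    by (rule DERIV_divide[OF m SS_deriv[OF assms]]) (use S in simp)
  moreover have "(1 * SS x y t - mm x y t * ((x^2+y^2-t) / SS x y t)) / (SS x y t * SS x y t)
      = 2*x^2*mm y x t / (SS x y t)^3"
  proof -
    have e: "(SS x y t)^2 = DD x y t" using SS_sq[OF assms] .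
    have "(1 * SS x y t - mm x y t * ((x^2+y^2-t) / SS x y t)) / (SS x y t * SS x y t)
        = ((SS x y t)^2 - mm x y t * (x^2+y^2-t)) / (SS x y t)^3"
      using S by (simp add: field_simps power2_eq_square power3_eq_cube)
    also have "(SS x y t)^2 - mm x y t * (x^2+y^2-t) = 2*x^2*mm y x t"
      unfolding e DD_def mm_def by (simp add: algebra_simps power2_eq_square)
    finally show ?thesis .
  qed
  ultimately show ?thesis by simp
qed



lemma R_alg:
  fixes a b t p5 K p1 p2 :: real
  assumes t: "t > 0" and a: "a > 0" and b: "b > 0"
    and ea: "a^2 = DD p5 K t" and eb: "b^2 = DD p1 p2 t"
  shows "mm K p5 t * 1 + 1 * mm p2 p1 t - (a * ((p1^2+p2^2-t)/b) + (p5^2+K^2-t)/a * b)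
    = (mm K p5 t * mm p2 p1 t - a*b)/t + ((mm p5 K t / a + mm p1 p2 t / b)/(2*t)) * (mm K p5 t * b + mm p2 p1 t * a)"
proof -
  have "(mm K p5 t * 1 + 1 * mm p2 p1 t - (a * ((p1^2+p2^2-t)/b) + (p5^2+K^2-t)/a * b)) * (2*t*a*b)
    = ((mm K p5 t * mm p2 p1 t - a*b)/t + ((mm p5 K t / a + mm p1 p2 t / b)/(2*t)) * (mm K p5 t * b + mm p2 p1 t * a)) * (2*t*a*b)"
  proof -
    have l: "(mm K p5 t * 1 + 1 * mm p2 p1 t - (a * ((p1^2+p2^2-t)/b) + (p5^2+K^2-t)/a * b)) * (2*t*a*b)
      = 2*t*(mm p2 p1 t + mm K p5 t)*a*b - 2*t*(p5^2+K^2-t)*b^2 - 2*t*(p1^2+p2^2-t)*a^2"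
      using t a b by (simp add: field_simps power2_eq_square)
    have r: "((mm K p5 t * mm p2 p1 t - a*b)/t + ((mm p5 K t / a + mm p1 p2 t / b)/(2*t)) * (mm K p5 t * b + mm p2 p1 t * a)) * (2*t*a*b)
      = 2*(mm K p5 t * mm p2 p1 t - a*b)*a*b + (mm p5 K t * b + mm p1 p2 t * a) * (mm K p5 t * b + mm p2 p1 t * a)"
      using t a b by (simp add: field_simps power2_eq_square)
    show ?thesis unfolding l r using ea eb unfolding DD_def mm_def by algebra
  qed
  then show ?thesis using t a b by simp
qed

lemma J_alg:
  fixes a b t p5 K p1 p2 :: real
  assumes t: "t > 0" and a: "a > 0" and b: "b > 0"
    and ea: "a^2 = DD p5 K t" and eb: "b^2 = DD p1 p2 t"
  shows "mm K p5 t * ((p1^2+p2^2-t)/b) + 1 * b + (mm p2 p1 t * ((p5^2+K^2-t)/a) + 1 * a)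
    = (mm K p5 t * b + mm p2 p1 t * a)/t - ((mm p5 K t / a + mm p1 p2 t / b)/(2*t)) * (mm K p5 t * mm p2 p1 t - a*b)"
proof -
  have "(mm K p5 t * ((p1^2+p2^2-t)/b) + 1 * b + (mm p2 p1 t * ((p5^2+K^2-t)/a) + 1 * a)) * (2*t*a*b)
    = ((mm K p5 t * b + mm p2 p1 t * a)/t - ((mm p5 K t / a + mm p1 p2 t / b)/(2*t)) * (mm K p5 t * mm p2 p1 t - a*b)) * (2*t*a*b)"
  proof -
    have l: "(mm K p5 t * ((p1^2+p2^2-t)/b) + 1 * b + (mm p2 p1 t * ((p5^2+K^2-t)/a) + 1 * a)) * (2*t*a*b)
      = 2*t*a*b^2 + 2*t*mm K p5 t*(p1^2+p2^2-t)*a + 2*t*a^2*b + 2*t*mm p2 p1 t*(p5^2+K^2-t)*b"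
      using t a b by (simp add: field_simps power2_eq_square)
    have r: "((mm K p5 t * b + mm p2 p1 t * a)/t - ((mm p5 K t / a + mm p1 p2 t / b)/(2*t)) * (mm K p5 t * mm p2 p1 t - a*b)) * (2*t*a*b)
      = 2*(mm K p5 t * b + mm p2 p1 t * a)*a*b - (mm p5 K t * b + mm p1 p2 t * a) * (mm K p5 t * mm p2 p1 t - a*b)"
      using t a b by (simp add: field_simps power2_eq_square)
    show ?thesis unfolding l r using ea eb unfolding DD_def mm_def by algebra
  qed
  then show ?thesis using t a b by simp
qed

lemma key_alg:
  fixes u v p r a b t :: real
  assumes "t > 0"
  shows "(((1+u^2)*r + (1+v^2)*p)/(4*t^2) - (u+v)/(2*t^2)) * (a*b*(r+p)) - ((u+v)/(2*t))^2 * (a*b*(r*p-1))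
    = a*b*((p+r-u-v)^2 + (p * v - r * u)^2)/(4*t^2)"
proof -
  have "(((1+u^2)*r + (1+v^2)*p)/(4*t^2) - (u+v)/(2*t^2)) * (a*b*(r+p)) - ((u+v)/(2*t))^2 * (a*b*(r*p-1))
     = a*b*((((1+u^2)*r + (1+v^2)*p) - 2*(u+v)) * (r+p) - (u+v)^2*(r*p-1))/(4*t^2)"
    using assms by (simp add: field_simps power2_eq_square)
  also have "(((1+u^2)*r + (1+v^2)*p) - 2*(u+v)) * (r+p) - (u+v)^2*(r*p-1) = (p+r-u-v)^2 + (p * v - r * u)^2"
    by algebra
  finally show ?thesis .
qed

lemma cot_id:
  fixes x y t a :: real
  assumes t: "t > 0" and a: "a > 0" and e: "a^2 = DD x y t"
  shows "2*x^2*mm y x t / a^3 = (1 + (mm x y t / a)^2) * (mm y x t / a) / (2*t)"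
proof -
  have "(1 + (mm x y t / a)^2) = 4*x^2*t / a^2"
    using a e by (simp add: field_simps DD_def)
  then show ?thesis using t a by (simp add: field_simps power2_eq_square power3_eq_cube)
qed

lemma reduce_alg:
  fixes al be R J c1 c2 :: real
  assumes al: "al \<ge> 0" and k: "be * J - al * R \<ge> 0" and J: "J \<ge> 0" and JR: "J = 0 \<Longrightarrow> R < 0"
    and c2: "c2 \<ge> 0" and Lc: "c1 * J + c2 * R \<ge> 0" and c1: "c2 = 0 \<Longrightarrow> c1 \<ge> 0"
  shows "be * (c1 * J + c2 * R) - al * (c1 * R - c2 * J) \<ge> 0"
proof (cases "J = 0")
  case True
  then have R: "R < 0" by (rule JR)
  from Lc True have "c2 * R \<ge> 0" by simp
  with R c2 have "c2 = 0" by (smt (verit) mult_pos_neg)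
  with c1 have "c1 \<ge> 0" by simp
  have "al * c1 * R \<le> 0" using al \<open>c1 \<ge> 0\<close> R
    by (simp add: mult_nonneg_nonneg mult_nonneg_nonpos)
  then show ?thesis using True \<open>c2 = 0\<close> by (simp add: algebra_simps)
next
  case False
  with J have Jp: "J > 0" by simp
  have "J * (be * (c1 * J + c2 * R) - al * (c1 * R - c2 * J))
      = (c1 * J + c2 * R) * (be * J - al * R) + al * c2 * (R^2 + J^2)"
    by (simp add: algebra_simps power2_eq_square)
  also have "\<dots> \<ge> 0"
  proof -
    have "(c1 * J + c2 * R) * (be * J - al * R) \<ge> 0" using Lc k by simp
    moreover have "al * c2 * (R^2 + J^2) \<ge> 0" using al c2 by simp
    ultimately show ?thesis by simp
  qed
  finally show ?thesis using Jp by (simp add: zero_le_mult_iff)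
qed

context
  fixes p5 K p1 p2 :: real
begin

definition "Rf t = mm K p5 t * mm p2 p1 t - SS p5 K t * SS p1 p2 t"
definition "Jf t = mm K p5 t * SS p1 p2 t + mm p2 p1 t * SS p5 K t"
definition "gf t = (mm p5 K t / SS p5 K t + mm p1 p2 t / SS p1 p2 t) / (2*t)"
definition "gdf t = (2*p5^2*mm K p5 t / (SS p5 K t)^3 + 2*p1^2*mm p2 p1 t / (SS p1 p2 t)^3) / (2*t)
   - (mm p5 K t / SS p5 K t + mm p1 p2 t / SS p1 p2 t) / (2*t^2)"
definition "Lg c1 c2 t = (c1 * Rf t - c2 * Jf t) / t"
definition "Lc c1 c2 t = (c1 * Jf t + c2 * Rf t) / t"

lemma mm_deriv: "(mm x y has_real_derivative 1) (at t)"
  unfolding mm_def by (auto intro!: derivative_eq_intros)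

context
  fixes t :: real
  assumes t: "t > 0" and d1: "DD p5 K t > 0" and d2: "DD p1 p2 t > 0"
begin

lemma R_deriv: "(Rf has_real_derivative Rf t / t + gf t * Jf t) (at t)"
proof -
  have "(Rf has_real_derivative mm K p5 t * 1 + 1 * mm p2 p1 t
       - (SS p5 K t * ((p1^2+p2^2-t)/SS p1 p2 t) + (p5^2+K^2-t)/SS p5 K t * SS p1 p2 t)) (at t)"
    unfolding Rf_def[abs_def]
    by (intro DERIV_diff DERIV_add DERIV_mult' mm_deriv SS_deriv d1 d2)
  then show ?thesis
    unfolding Rf_def Jf_def gf_def
    by (rule DERIV_eqI, intro R_alg t SS_pos d1 d2 SS_sq)
qed

lemma J_deriv: "(Jf has_real_derivative Jf t / t - gf t * Rf t) (at t)"
proof -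
  have "(Jf has_real_derivative mm K p5 t * ((p1^2+p2^2-t)/SS p1 p2 t) + 1 * SS p1 p2 t
       + (mm p2 p1 t * ((p5^2+K^2-t)/SS p5 K t) + 1 * SS p5 K t)) (at t)"
    unfolding Jf_def[abs_def]
    by (intro DERIV_diff DERIV_add DERIV_mult' mm_deriv SS_deriv d1 d2)
  then show ?thesis
    unfolding Rf_def Jf_def gf_def
    by (rule DERIV_eqI, intro J_alg t SS_pos d1 d2 SS_sq)
qed

lemma Lg_deriv: "(Lg c1 c2 has_real_derivative gf t * Lc c1 c2 t) (at t)"
proof -
  have "((\<lambda>t. (c1 * Rf t - c2 * Jf t) / t) has_real_derivative
     ((c1 * (Rf t / t + gf t * Jf t) - c2 * (Jf t / t - gf t * Rf t)) * t - (c1 * Rf t - c2 * Jf t) * 1) / (t * t)) (at t)"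
    by (intro DERIV_divide DERIV_diff DERIV_cmult R_deriv J_deriv DERIV_ident) (use t in auto)
  then show ?thesis unfolding Lg_def[abs_def]
    by (rule DERIV_eqI) (use t in \<open>simp add: Lc_def field_simps\<close>)
qed

lemma Lc_deriv: "(Lc c1 c2 has_real_derivative - (gf t * Lg c1 c2 t)) (at t)"
proof -
  have "((\<lambda>t. (c1 * Jf t + c2 * Rf t) / t) has_real_derivative
     ((c1 * (Jf t / t - gf t * Rf t) + c2 * (Rf t / t + gf t * Jf t)) * t - (c1 * Jf t + c2 * Rf t) * 1) / (t * t)) (at t)"
    by (intro DERIV_divide DERIV_add DERIV_cmult R_deriv J_deriv DERIV_ident) (use t in auto)
  then show ?thesis unfolding Lc_def[abs_def]
    by (rule DERIV_eqI) (use t in \<open>simp add: Lg_def field_simps\<close>)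
qed

lemma g_deriv: "(gf has_real_derivative gdf t) (at t)"
proof -
  have "((\<lambda>t. (mm p5 K t / SS p5 K t + mm p1 p2 t / SS p1 p2 t) / (2*t)) has_real_derivative
     ((2*p5^2*mm K p5 t / (SS p5 K t)^3 + 2*p1^2*mm p2 p1 t / (SS p1 p2 t)^3) * (2*t)
      - (mm p5 K t / SS p5 K t + mm p1 p2 t / SS p1 p2 t) * 2) / ((2*t) * (2*t))) (at t)"
    by (intro DERIV_divide DERIV_add cot_deriv d1 d2 DERIV_cmult_right DERIV_ident
        derivative_eq_intros) (use t in auto)
  then show ?thesis unfolding gf_def[abs_def]
    by (rule DERIV_eqI) (use t in \<open>simp add: gdf_def field_simps power2_eq_square\<close>)
qed

lemma key_ineq: "gdf t * Jf t - (gf t)^2 * Rf t \<ge> 0"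
proof -
  define a where "a = SS p5 K t"
  define b where "b = SS p1 p2 t"
  have a: "a > 0" and b: "b > 0" using SS_pos d1 d2 a_def b_def by auto
  have ea: "a^2 = DD p5 K t" and eb: "b^2 = DD p1 p2 t" using SS_sq d1 d2 a_def b_def by auto
  have g1: "gdf t = (((1+(mm p5 K t / a)^2)*(mm K p5 t / a) + (1+(mm p1 p2 t / b)^2)*(mm p2 p1 t / b))/(4*t^2)
      - (mm p5 K t / a + mm p1 p2 t / b)/(2*t^2))"
    unfolding gdf_def a_def[symmetric] b_def[symmetric] cot_id[OF t a ea] cot_id[OF t b eb]
    using t a b by (simp add: field_simps power2_eq_square)
  have J1: "Jf t = a*b*(mm K p5 t / a + mm p2 p1 t / b)"
    unfolding Jf_def a_def[symmetric] b_def[symmetric] using a b by (simp add: field_simps)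
  have R1: "Rf t = a*b*(mm K p5 t / a * (mm p2 p1 t / b) - 1)"
    unfolding Rf_def a_def[symmetric] b_def[symmetric] using a b by (simp add: field_simps)
  have g2: "gf t = (mm p5 K t / a + mm p1 p2 t / b)/(2*t)"
    unfolding gf_def a_def b_def ..
  show ?thesis unfolding g1 J1 R1 g2 key_alg[OF t]
    using a b t by (intro divide_nonneg_pos mult_nonneg_nonneg add_nonneg_nonneg) auto
qed

lemma J0_R: "Jf t = 0 \<Longrightarrow> Rf t < 0"
proof -
  assume J: "Jf t = 0"
  define a where "a = SS p5 K t"
  define b where "b = SS p1 p2 t"
  have a: "a > 0" and b: "b > 0" using SS_pos d1 d2 a_def b_def by auto
  from J have "mm K p5 t = - mm p2 p1 t * a / b" unfolding Jf_def a_def[symmetric] b_def[symmetric]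
    using b by (simp add: field_simps)
  then have "Rf t = - ((mm p2 p1 t)^2 * a / b + a * b)"
    unfolding Rf_def a_def[symmetric] b_def[symmetric] by (simp add: power2_eq_square)
  also have "\<dots> < 0" using a b by (smt (verit) divide_nonneg_pos mult_pos_pos zero_le_mult_iff zero_le_power2)
  finally show ?thesis .
qed

lemma conc_ineq:
  assumes J: "Jf t \<ge> 0" and c2: "c2 \<ge> 0" and Lc: "Lc c1 c2 t \<ge> 0" and c1: "c2 = 0 \<Longrightarrow> c1 \<ge> 0"
  shows "gdf t * Lc c1 c2 t - (gf t)^2 * Lg c1 c2 t \<ge> 0"
proof -
  have Lc': "c1 * Jf t + c2 * Rf t \<ge> 0" using Lc t unfolding Lc_def by (simp add: divide_nonneg_pos zero_le_divide_iff)
  have "gdf t * (c1 * Jf t + c2 * Rf t) - (gf t)^2 * (c1 * Rf t - c2 * Jf t) \<ge> 0"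
    by (rule reduce_alg[OF _ key_ineq J J0_R c2 Lc' c1]) auto
  moreover have "gdf t * Lc c1 c2 t - (gf t)^2 * Lg c1 c2 t
     = (gdf t * (c1 * Jf t + c2 * Rf t) - (gf t)^2 * (c1 * Rf t - c2 * Jf t)) / t"
    unfolding Lc_def Lg_def using t by (simp add: field_simps)
  ultimately show ?thesis using t by simp
qed

end
end



lemma term1_deriv:
  fixes X :: "real \<Rightarrow> real"
  assumes X: "(X has_real_derivative X1) (at t)" and pos: "X t > 0"
  shows "((\<lambda>s. c / sqrt (X s)) has_real_derivative - c * X1 / (2 * X t * sqrt (X t))) (at t)"
proof -
  have sq: "((\<lambda>s. sqrt (X s)) has_real_derivative inverse (sqrt (X t)) / 2 * X1) (at t)"
    by (rule DERIV_chain2[OF DERIV_real_sqrt[OF pos] X])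
  have "((\<lambda>s. c / sqrt (X s)) has_real_derivative
      (0 * sqrt (X t) - c * (inverse (sqrt (X t)) / 2 * X1)) / (sqrt (X t) * sqrt (X t))) (at t)"
    by (rule DERIV_divide[OF DERIV_const sq]) (use pos in simp)
  then show ?thesis
    by (rule DERIV_eqI) (use pos in \<open>simp add: field_simps\<close>)
qed

lemma term2_deriv:
  fixes X X' :: "real \<Rightarrow> real"
  assumes X: "(X has_real_derivative X' t) (at t)" and X': "(X' has_real_derivative X2) (at t)"
    and pos: "X t > 0"
  shows "((\<lambda>s. - c * X' s / (2 * X s * sqrt (X s))) has_real_derivative
      c * (3 * (X' t)^2 / (4 * (X t)^2 * sqrt (X t)) - X2 / (2 * X t * sqrt (X t)))) (at t)"
proof -
  have sq: "((\<lambda>s. sqrt (X s)) has_real_derivative inverse (sqrt (X t)) / 2 * X' t) (at t)"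
    by (rule DERIV_chain2[OF DERIV_real_sqrt[OF pos] X])
  have den: "((\<lambda>s. 2 * X s * sqrt (X s)) has_real_derivative
      (2 * X t) * (inverse (sqrt (X t)) / 2 * X' t) + (2 * X' t) * sqrt (X t)) (at t)"
    by (intro DERIV_mult' DERIV_cmult X sq)
  have "((\<lambda>s. - c * X' s / (2 * X s * sqrt (X s))) has_real_derivative
      ((- c * X2) * (2 * X t * sqrt (X t)) - (- c * X' t) * ((2 * X t) * (inverse (sqrt (X t)) / 2 * X' t) + (2 * X' t) * sqrt (X t)))
       / ((2 * X t * sqrt (X t)) * (2 * X t * sqrt (X t)))) (at t)"
    by (rule DERIV_divide[OF DERIV_cmult[OF X'] den]) (use pos in simp)
  then show ?thesis
  proof (rule DERIV_eqI)
    have s2: "sqrt (X t) * sqrt (X t) = X t" using pos by simp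
    have sp: "sqrt (X t) > 0" using pos by simp
    show "((- c * X2) * (2 * X t * sqrt (X t)) - (- c * X' t) * ((2 * X t) * (inverse (sqrt (X t)) / 2 * X' t) + (2 * X' t) * sqrt (X t)))
       / ((2 * X t * sqrt (X t)) * (2 * X t * sqrt (X t)))
      = c * (3 * (X' t)^2 / (4 * (X t)^2 * sqrt (X t)) - X2 / (2 * X t * sqrt (X t)))"
      using pos sp s2 by (simp add: field_simps power2_eq_square)
  qed
qed

lemma term2_nonneg:
  assumes "c \<ge> 0" "X2 \<le> 0" "(X :: real) > 0"
  shows "c * (3 * X1^2 / (4 * X^2 * sqrt X) - X2 / (2 * X * sqrt X)) \<ge> 0"
proof -
  have "3 * X1^2 / (4 * X^2 * sqrt X) \<ge> 0" using assms by simp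
  moreover have "- X2 / (2 * X * sqrt X) \<ge> 0" using assms by (intro divide_nonneg_pos) auto
  ultimately have "3 * X1^2 / (4 * X^2 * sqrt X) - X2 / (2 * X * sqrt X) \<ge> 0" by simp
  then show ?thesis using assms by simp
qed

context
  fixes p1 p2 a3 a4 p5 K :: real
begin

definition "n4 = mm a3 a4 (K^2)"
definition "S4 = SS a3 a4 (K^2)"

definition "X1f t = p2^2 + K^2 - Lg p5 K p1 p2 1 0 t / 2"
definition "X1d t = - (gf p5 K p1 p2 t * Lc p5 K p1 p2 1 0 t) / 2"
definition "X1dd t = - (gdf p5 K p1 p2 t * Lc p5 K p1 p2 1 0 t - (gf p5 K p1 p2 t)^2 * Lg p5 K p1 p2 1 0 t) / 2"

definition "X3f t = p2^2 + a3^2 - Lg p5 K p1 p2 n4 S4 t / (4*K^2)"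
definition "X3d t = - (gf p5 K p1 p2 t * Lc p5 K p1 p2 n4 S4 t) / (4*K^2)"
definition "X3dd t = - (gdf p5 K p1 p2 t * Lc p5 K p1 p2 n4 S4 t - (gf p5 K p1 p2 t)^2 * Lg p5 K p1 p2 n4 S4 t) / (4*K^2)"

definition "X5f t = t + a3^2 - (n4 * mm K p5 t - S4 * SS p5 K t) / (2*K^2)"
definition "X5d t = 1 - (n4 * 1 - S4 * ((p5^2+K^2-t) / SS p5 K t)) / (2*K^2)"
definition "X5dd t = S4 * ((- 1 * SS p5 K t - (p5^2+K^2-t) * ((p5^2+K^2-t) / SS p5 K t)) / (SS p5 K t * SS p5 K t)) / (2*K^2)"

context
  fixes t :: real
  assumes t: "t > 0" and d1: "DD p5 K t > 0" and d2: "DD p1 p2 t > 0"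
begin

lemma X1_deriv: "(X1f has_real_derivative X1d t) (at t)"
proof -
  have "((\<lambda>t. p2^2 + K^2 - Lg p5 K p1 p2 1 0 t / 2) has_real_derivative 0 - gf p5 K p1 p2 t * Lc p5 K p1 p2 1 0 t / 2) (at t)"
    by (intro DERIV_diff DERIV_const DERIV_cdivide Lg_deriv t d1 d2)
  then show ?thesis unfolding X1f_def[abs_def] X1d_def by simp
qed

lemma X1d_deriv: "(X1d has_real_derivative X1dd t) (at t)"
proof -
  have "((\<lambda>t. - (gf p5 K p1 p2 t * Lc p5 K p1 p2 1 0 t) / 2) has_real_derivative
     - (gf p5 K p1 p2 t * (- (gf p5 K p1 p2 t * Lg p5 K p1 p2 1 0 t)) + gdf p5 K p1 p2 t * Lc p5 K p1 p2 1 0 t) / 2) (at t)"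
    by (intro DERIV_cdivide DERIV_minus DERIV_mult' Lg_deriv Lc_deriv g_deriv t d1 d2)
  then show ?thesis unfolding X1d_def[abs_def] X1dd_def by (rule DERIV_eqI) (simp add: power2_eq_square algebra_simps)
qed

lemma X3_deriv: "(X3f has_real_derivative X3d t) (at t)"
proof -
  have "((\<lambda>t. p2^2 + a3^2 - Lg p5 K p1 p2 n4 S4 t / (4*K^2)) has_real_derivative 0 - gf p5 K p1 p2 t * Lc p5 K p1 p2 n4 S4 t / (4*K^2)) (at t)"
    by (intro DERIV_diff DERIV_const DERIV_cdivide Lg_deriv t d1 d2)
  then show ?thesis unfolding X3f_def[abs_def] X3d_def by simp
qed

lemma X3d_deriv: "(X3d has_real_derivative X3dd t) (at t)"
proof -
  have "((\<lambda>t. - (gf p5 K p1 p2 t * Lc p5 K p1 p2 n4 S4 t) / (4*K^2)) has_real_derivative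
     - (gf p5 K p1 p2 t * (- (gf p5 K p1 p2 t * Lg p5 K p1 p2 n4 S4 t)) + gdf p5 K p1 p2 t * Lc p5 K p1 p2 n4 S4 t) / (4*K^2)) (at t)"
    by (intro DERIV_cdivide DERIV_minus DERIV_mult' Lg_deriv Lc_deriv g_deriv t d1 d2)
  then show ?thesis unfolding X3d_def[abs_def] X3dd_def by (rule DERIV_eqI) (simp add: power2_eq_square algebra_simps)
qed

lemma X5_deriv: "(X5f has_real_derivative X5d t) (at t)"
proof -
  have "((\<lambda>t. t + a3^2 - (n4 * mm K p5 t - S4 * SS p5 K t) / (2*K^2)) has_real_derivative
      1 + 0 - (n4 * 1 - S4 * ((p5^2+K^2-t) / SS p5 K t)) / (2*K^2)) (at t)"
    by (intro DERIV_diff DERIV_add DERIV_ident DERIV_const DERIV_cdivide DERIV_cmult mm_deriv SS_deriv d1)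
  then show ?thesis unfolding X5f_def[abs_def] X5d_def by simp
qed

lemma X5d_deriv: "(X5d has_real_derivative X5dd t) (at t)"
proof -
  have "((\<lambda>t. 1 - (n4 * 1 - S4 * ((p5^2+K^2-t) / SS p5 K t)) / (2*K^2)) has_real_derivative
      0 - (0 - S4 * ((- 1 * SS p5 K t - (p5^2+K^2-t) * ((p5^2+K^2-t) / SS p5 K t)) / (SS p5 K t * SS p5 K t))) / (2*K^2)) (at t)"
    by (intro DERIV_diff DERIV_const DERIV_cdivide DERIV_cmult DERIV_divide SS_deriv d1
        derivative_eq_intros) (use SS_pos[OF d1] in auto)
  then show ?thesis unfolding X5d_def[abs_def] X5dd_def by simp
qed

lemma X5dd_nonpos: "DD a3 a4 (K^2) \<ge> 0 \<Longrightarrow> X5dd t \<le> 0"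
proof -
  assume d4: "DD a3 a4 (K^2) \<ge> 0"
  have S: "SS p5 K t > 0" using SS_pos[OF d1] .
  have "(- 1 * SS p5 K t - (p5^2+K^2-t) * ((p5^2+K^2-t) / SS p5 K t)) \<le> 0"
    using S by (smt (verit) divide_nonneg_pos mult_nonneg_nonneg zero_le_square mult.assoc times_divide_eq_right)
  then have "(- 1 * SS p5 K t - (p5^2+K^2-t) * ((p5^2+K^2-t) / SS p5 K t)) / (SS p5 K t * SS p5 K t) \<le> 0"
    using S by (simp add: divide_nonpos_pos)
  moreover have "S4 \<ge> 0" unfolding S4_def SS_def using d4 by simp
  ultimately show ?thesis unfolding X5dd_def
    by (intro divide_nonpos_nonneg[OF mult_nonneg_nonpos]) auto
qed

lemma X1dd_nonpos: "Jf p5 K p1 p2 t \<ge> 0 \<Longrightarrow> X1dd t \<le> 0"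
proof -
  assume J: "Jf p5 K p1 p2 t \<ge> 0"
  have "Lc p5 K p1 p2 1 0 t \<ge> 0" using J t unfolding Lc_def by simp
  then have "gdf p5 K p1 p2 t * Lc p5 K p1 p2 1 0 t - (gf p5 K p1 p2 t)^2 * Lg p5 K p1 p2 1 0 t \<ge> 0"
    by (intro conc_ineq t d1 d2 J) auto
  then show ?thesis unfolding X1dd_def by simp
qed

lemma X3dd_nonpos:
  assumes d4: "DD a3 a4 (K^2) \<ge> 0" and J: "Jf p5 K p1 p2 t \<ge> 0" and L: "Lc p5 K p1 p2 n4 S4 t \<ge> 0" and c: "S4 = 0 \<Longrightarrow> n4 \<ge> 0"
  shows "X3dd t \<le> 0"
proof -
  have "S4 \<ge> 0" unfolding S4_def SS_def using d4 by simp
  then have "gdf p5 K p1 p2 t * Lc p5 K p1 p2 n4 S4 t - (gf p5 K p1 p2 t)^2 * Lg p5 K p1 p2 n4 S4 t \<ge> 0"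
    by (intro conc_ineq t d1 d2 J L c)
  then show ?thesis unfolding X3dd_def by (intro divide_nonpos_nonneg) auto
qed

end
end



lemma cross_cyc: "cross (b - a) (c - a) = cross (c - b) (a - b)"
  by (simp add: cross_def algebra_simps)

lemma cross_swap: "cross z w = - cross w z"
  by (simp add: cross_def algebra_simps)

lemma cmod_diff_sq: "(cmod (z - w))^2 = (cmod z)^2 + (cmod w)^2 - 2 * Re (cnj w * z)"
  by (simp add: cmod_power2 power2_diff algebra_simps)

lemma cx_det_pos:
  assumes "Re z = x" "(cmod z)^2 = m" "Im z \<ge> 0"
  shows "z = Complex x (sqrt (m - x^2))"
proof -
  have "(Im z)^2 = m - x^2" using assms by (simp add: cmod_power2)
  then have "Im z = sqrt (m - x^2)" using assms(3) by (metis real_sqrt_unique)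
  then show ?thesis using assms(1) by (simp add: complex_eq_iff)
qed

lemma cx_det_neg:
  assumes "Re z = x" "(cmod z)^2 = m" "Im z \<le> 0"
  shows "z = Complex x (- sqrt (m - x^2))"
proof -
  have "(- Im z)^2 = m - x^2" using assms by (simp add: cmod_power2)
  then have "- Im z = sqrt (m - x^2)" using assms(3) by (metis neg_0_le_iff_le real_sqrt_unique)
  then show ?thesis using assms(1) by (simp add: complex_eq_iff)
qed

lemma DD_quarter: "(x^2*t) - (mm x y t / 2)^2 = DD x y t / 4"
  unfolding DD_def by (simp add: power2_eq_square field_simps)

lemma sqrt_quarter: "sqrt (D / 4) = sqrt D / 2"
  by (simp add: real_sqrt_divide)

lemma DD_nonneg_of: "Re z = mm x y t / 2 \<Longrightarrow> (cmod z)^2 = x^2 * t \<Longrightarrow> DD x y t \<ge> 0"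
proof -
  assume r: "Re z = mm x y t / 2" and c: "(cmod z)^2 = x^2 * t"
  have "(Re z)^2 + (Im z)^2 = x^2 * t" using c by (simp add: cmod_power2)
  then have "(Im z)^2 = x^2*t - (mm x y t / 2)^2" unfolding r by linarith
  then have "(Im z)^2 = DD x y t / 4" using DD_quarter[of x t y] by simp
  then show ?thesis by (metis zero_le_power2 divide_nonneg_pos zero_less_numeral
    le_divide_eq_numeral1(1) mult_zero_left)
qed

lemma cnj_mult_self_cmod: "cnj z * z = complex_of_real ((cmod z)^2)"
  by (metis complex_norm_square mult.commute of_real_power)

lemma config:
  fixes z1 z2 z3 z4 z5 :: complex and p1 p2 a3 a4 p5 K t :: real
  assumes s1: "cmod (z1 - z2) = p1" and s2: "cmod (z2 - z3) = p2" and s3: "cmod (z3 - z4) = a3"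
    and s4: "cmod (z4 - z5) = a4" and s5: "cmod (z5 - z1) = p5"
    and k: "cmod (z3 - z5) = K" and kp: "K > 0"
    and tt: "(cmod (z1 - z3))^2 = t"
    and c513: "cross (z1 - z5) (z3 - z5) \<ge> 0" and c123: "cross (z2 - z1) (z3 - z1) \<ge> 0"
    and c345: "cross (z4 - z3) (z5 - z3) \<ge> 0" and c235: "cross (z3 - z2) (z5 - z2) \<ge> 0"
    and c342: "cross (z4 - z3) (z2 - z3) \<ge> 0" and c341: "cross (z4 - z3) (z1 - z3) \<ge> 0"
    and d1: "DD p5 K t > 0" and d2: "DD p1 p2 t > 0"
  shows "(cmod (z2 - z5))^2 = X1f p1 p2 p5 K t"
    and "(cmod (z2 - z4))^2 = X3f p1 p2 a3 a4 p5 K t"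
    and "(cmod (z1 - z4))^2 = X5f a3 a4 p5 K t"
    and "DD a3 a4 (K^2) \<ge> 0"
    and "Jf p5 K p1 p2 t \<ge> 0"
    and "Lc p5 K p1 p2 (n4 a3 a4 K) (S4 a3 a4 K) t \<ge> 0"
    and "S4 a3 a4 K = 0 \<Longrightarrow> n4 a3 a4 K \<ge> 0"
    and "X1f p1 p2 p5 K t > 0" and "X3f p1 p2 a3 a4 p5 K t > 0" and "X5f a3 a4 p5 K t > 0"
proof -
  define E where "E = z5 - z3"
  define P where "P = z1 - z3"
  define Q where "Q = z2 - z3"
  define T where "T = z4 - z3"
  have t: "t > 0"
  proof -
    have "4*p5^2*t > (mm p5 K t)^2" using d1 unfolding DD_def by simp
    then have "p5^2 * t > 0" using zero_le_power2[of "mm p5 K t"] by linarith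
    then show ?thesis by (simp add: zero_less_mult_iff)
  qed
  have cE: "cmod E = K" unfolding E_def using k by (simp add: norm_minus_commute)
  have cP: "(cmod P)^2 = t" unfolding P_def using tt .
  have cQ: "cmod Q = p2" unfolding Q_def using s2 by (simp add: norm_minus_commute)
  have cT: "cmod T = a3" unfolding T_def using s3 by (simp add: norm_minus_commute)
  have cPE: "cmod (P - E) = p5" unfolding P_def E_def using s5 by (simp add: norm_minus_commute)
  have cQP: "cmod (Q - P) = p1" unfolding P_def Q_def using s1 by (simp add: norm_minus_commute)
  have cTE: "cmod (T - E) = a4" unfolding T_def E_def using s4 by simp
  define S1 where "S1 = SS p5 K t"
  define S2 where "S2 = SS p1 p2 t"
  define n1 where "n1 = mm K p5 t"
  define n2 where "n2 = mm p2 p1 t"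
  define nn4 where "nn4 = n4 a3 a4 K"
  define SS4 where "SS4 = S4 a3 a4 K"
  have S1p: "S1 > 0" unfolding S1_def using SS_pos[OF d1] .
  have S2p: "S2 > 0" unfolding S2_def using SS_pos[OF d2] .
  have zeta: "cnj E * P = Complex (n1/2) (S1/2)"
  proof -
    have r: "Re (cnj E * P) = mm K p5 t / 2"
      using cmod_diff_sq[of P E] cPE cP cE unfolding mm_def by simp
    have m: "(cmod (cnj E * P))^2 = K^2 * t" using cE cP by (simp add: norm_mult power_mult_distrib)
    have i: "Im (cnj E * P) \<ge> 0"
    proof -
      have "cross (z1 - z5) (z3 - z5) = cross (E) (P)"
        unfolding E_def P_def using cross_cyc[of z1 z5 z3] cross_cyc[of z3 z1 z5] by simp
      then show ?thesis using c513 unfolding cross_def by simp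
    qed
    have "cnj E * P = Complex (mm K p5 t / 2) (sqrt (K^2 * t - (mm K p5 t / 2)^2))"
      by (rule cx_det_pos[OF r m i])
    also have "sqrt (K^2 * t - (mm K p5 t / 2)^2) = S1 / 2"
      unfolding DD_quarter sqrt_quarter S1_def SS_def DD_sym[of K p5] ..
    finally show ?thesis unfolding n1_def .
  qed
  have xi: "cnj P * Q = Complex (n2/2) (S2/2)"
  proof -
    have r: "Re (cnj P * Q) = mm p2 p1 t / 2"
      using cmod_diff_sq[of Q P] cQP cP cQ unfolding mm_def by simp
    have m: "(cmod (cnj P * Q))^2 = p2^2 * t" using cQ cP by (simp add: norm_mult power_mult_distrib)
    have i: "Im (cnj P * Q) \<ge> 0"
    proof -
      have "cross (z2 - z1) (z3 - z1) = cross P Q"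
        unfolding Q_def P_def using cross_cyc[of z2 z1 z3] cross_cyc[of z3 z2 z1] by simp
      then show ?thesis using c123 unfolding cross_def by simp
    qed
    have "cnj P * Q = Complex (mm p2 p1 t / 2) (sqrt (p2^2 * t - (mm p2 p1 t / 2)^2))"
      by (rule cx_det_pos[OF r m i])
    also have "sqrt (p2^2 * t - (mm p2 p1 t / 2)^2) = S2 / 2"
      unfolding DD_quarter sqrt_quarter S2_def SS_def DD_sym[of p2 p1] ..
    finally show ?thesis unfolding n2_def .
  qed
  have d4: "DD a3 a4 (K^2) \<ge> 0"
  proof (rule DD_nonneg_of)
    show "Re (cnj E * T) = mm a3 a4 (K^2) / 2"
      using cmod_diff_sq[of T E] cTE cT cE unfolding mm_def by simp
    show "(cmod (cnj E * T))^2 = a3^2 * K^2" using cE cT by (simp add: norm_mult power_mult_distrib)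
  qed
  have tau: "cnj E * T = Complex (nn4/2) (- SS4/2)"
  proof -
    have r: "Re (cnj E * T) = mm a3 a4 (K^2) / 2"
      using cmod_diff_sq[of T E] cTE cT cE unfolding mm_def by simp
    have m: "(cmod (cnj E * T))^2 = a3^2 * K^2" using cE cT by (simp add: norm_mult power_mult_distrib)
    have i: "Im (cnj E * T) \<le> 0"
    proof -
      have "cross (z4 - z3) (z5 - z3) = cross T E" unfolding T_def E_def by simp
      then show ?thesis using c345 unfolding cross_def by (simp add: algebra_simps)
    qed
    have "cnj E * T = Complex (mm a3 a4 (K^2) / 2) (- sqrt (a3^2 * K^2 - (mm a3 a4 (K^2) / 2)^2))"
      by (rule cx_det_neg[OF r m i])
    also have "sqrt (a3^2 * K^2 - (mm a3 a4 (K^2) / 2)^2) = SS4 / 2"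
      unfolding DD_quarter sqrt_quarter SS4_def S4_def SS_def ..
    finally show ?thesis unfolding nn4_def n4_def by simp
  qed
  have SS4nn: "SS4 \<ge> 0" unfolding SS4_def S4_def SS_def using d4 by simp
  have omega: "cnj E * Q = Complex (Rf p5 K p1 p2 t / (4*t)) (Jf p5 K p1 p2 t / (4*t))"
  proof -
    have "(cnj E * P) * (cnj P * Q) = (cnj E * Q) * (cnj P * P)" by (simp add: algebra_simps)
    also have "cnj P * P = complex_of_real t" using cnj_mult_self_cmod[of P] cP by simp
    finally have h: "(cnj E * P) * (cnj P * Q) = (cnj E * Q) * complex_of_real t" .
    have "cnj E * Q = (cnj E * P) * (cnj P * Q) / complex_of_real t" unfolding h using t by simp
    also have "\<dots> = Complex (Rf p5 K p1 p2 t / (4*t)) (Jf p5 K p1 p2 t / (4*t))"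
      unfolding zeta xi Rf_def Jf_def S1_def[symmetric] S2_def[symmetric] n1_def[symmetric] n2_def[symmetric]
      using t by (simp add: complex_eq_iff field_simps Complex_eq)
    finally show ?thesis .
  qed
  have EE: "cnj E * E = complex_of_real (K^2)" using cnj_mult_self_cmod[of E] cE by simp
  have TQ: "cnj T * Q = cnj (cnj E * T) * (cnj E * Q) / complex_of_real (K^2)"
  proof -
    have "cnj (cnj E * T) * (cnj E * Q) = (cnj T * Q) * (cnj E * E)" by (simp add: algebra_simps)
    then have h: "cnj (cnj E * T) * (cnj E * Q) = (cnj T * Q) * complex_of_real (K^2)" unfolding EE .
    show ?thesis unfolding h using kp by simp
  qed
  have TP: "cnj T * P = cnj (cnj E * T) * (cnj E * P) / complex_of_real (K^2)"
  proof -
    have "cnj (cnj E * T) * (cnj E * P) = (cnj T * P) * (cnj E * E)" by (simp add: algebra_simps)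
    then have h: "cnj (cnj E * T) * (cnj E * P) = (cnj T * P) * complex_of_real (K^2)" unfolding EE .
    show ?thesis unfolding h using kp by simp
  qed
  have TQv: "cnj T * Q = Complex ((nn4 * Rf p5 K p1 p2 t - SS4 * Jf p5 K p1 p2 t) / (8*t*K^2))
       ((nn4 * Jf p5 K p1 p2 t + SS4 * Rf p5 K p1 p2 t) / (8*t*K^2))"
    unfolding TQ tau omega using t kp by (simp add: complex_eq_iff field_simps Complex_eq)
  have TPv: "cnj T * P = Complex ((nn4 * n1 - SS4 * S1) / (4*K^2)) ((nn4 * S1 + SS4 * n1) / (4*K^2))"
    unfolding TP tau zeta using kp by (simp add: complex_eq_iff field_simps Complex_eq)
  show X1e: "(cmod (z2 - z5))^2 = X1f p1 p2 p5 K t"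
  proof -
    have "z2 - z5 = Q - E" unfolding Q_def E_def by simp
    then have "(cmod (z2 - z5))^2 = p2^2 + K^2 - 2 * Re (cnj E * Q)" using cmod_diff_sq[of Q E] cQ cE by simp
    also have "\<dots> = X1f p1 p2 p5 K t" unfolding omega X1f_def Lg_def using t by (simp add: field_simps)
    finally show ?thesis .
  qed
  show "(cmod (z2 - z4))^2 = X3f p1 p2 a3 a4 p5 K t"
  proof -
    have "z2 - z4 = Q - T" unfolding Q_def T_def by simp
    then have "(cmod (z2 - z4))^2 = p2^2 + a3^2 - 2 * Re (cnj T * Q)" using cmod_diff_sq[of Q T] cQ cT by simp
    also have "\<dots> = X3f p1 p2 a3 a4 p5 K t" unfolding TQv X3f_def Lg_def nn4_def SS4_def
      using t kp by (simp add: field_simps)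
    finally show ?thesis .
  qed
  show "(cmod (z1 - z4))^2 = X5f a3 a4 p5 K t"
  proof -
    have "z1 - z4 = P - T" unfolding P_def T_def by simp
    then have "(cmod (z1 - z4))^2 = t + a3^2 - 2 * Re (cnj T * P)" using cmod_diff_sq[of P T] cP cT by simp
    also have "\<dots> = X5f a3 a4 p5 K t" unfolding TPv X5f_def nn4_def SS4_def n1_def S1_def
      using t kp by (simp add: field_simps)
    finally show ?thesis .
  qed
  show "DD a3 a4 (K^2) \<ge> 0" by (rule d4)
  have Jnn: "Jf p5 K p1 p2 t \<ge> 0"
  proof -
    have "cross (z3 - z2) (z5 - z2) = cross E Q"
      unfolding E_def Q_def using cross_cyc[of z3 z2 z5] cross_cyc[of z5 z3 z2] by simp
    then have "Im (cnj E * Q) \<ge> 0" using c235 unfolding cross_def by simp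
    then show ?thesis unfolding omega using t by (simp add: zero_le_divide_iff)
  qed
  show "Lc p5 K p1 p2 (n4 a3 a4 K) (S4 a3 a4 K) t \<ge> 0"
  proof -
    have "Im (cnj T * Q) \<ge> 0" using c342 unfolding cross_def T_def Q_def by simp
    then have "(nn4 * Jf p5 K p1 p2 t + SS4 * Rf p5 K p1 p2 t) / (8*t*K^2) \<ge> 0" unfolding TQv by simp
    moreover have "8*t*K^2 > 0" using t kp by simp
    ultimately have "(nn4 * Jf p5 K p1 p2 t + SS4 * Rf p5 K p1 p2 t) \<ge> 0"
      by (simp add: zero_le_divide_iff)
    then show ?thesis unfolding Lc_def nn4_def SS4_def using t by simp
  qed
  have n4nn: "SS4 = 0 \<Longrightarrow> nn4 \<ge> 0"
  proof -
    assume z: "SS4 = 0"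
    have "Im (cnj T * P) \<ge> 0" using c341 unfolding cross_def T_def P_def by simp
    then have "(nn4 * S1 + SS4 * n1) / (4*K^2) \<ge> 0" unfolding TPv by simp
    then have "nn4 * S1 \<ge> 0" using z kp by (simp add: zero_le_divide_iff)
    then show ?thesis using S1p by (simp add: zero_le_mult_iff)
  qed
  show "Jf p5 K p1 p2 t \<ge> 0" by (rule Jnn)
  show "S4 a3 a4 K = 0 \<Longrightarrow> n4 a3 a4 K \<ge> 0" using n4nn unfolding SS4_def nn4_def by simp
  have JR: "Jf p5 K p1 p2 t = 0 \<Longrightarrow> Rf p5 K p1 p2 t < 0" by (rule J0_R[OF t d1 d2])
  show "X1f p1 p2 p5 K t > 0"
  proof -
    have "z2 - z5 = Q - E" unfolding Q_def E_def by simp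
    have "Q \<noteq> E"
    proof
      assume "Q = E"
      then have "cnj E * Q = complex_of_real (K^2)" using EE by simp
      then have "Jf p5 K p1 p2 t / (4*t) = 0" and "Rf p5 K p1 p2 t / (4*t) = K^2"
        unfolding omega by (simp_all add: complex_eq_iff)
      moreover have "Rf p5 K p1 p2 t < 0" using JR calculation(1) t by simp
      then have "Rf p5 K p1 p2 t / (4*t) < 0" using t by (simp add: divide_neg_pos)
      moreover have "K^2 > 0" using kp by simp
      ultimately show False by linarith
    qed
    then have "cmod (z2 - z5) > 0" using \<open>z2 - z5 = Q - E\<close> by simp
    then show ?thesis using \<open>(cmod (z2 - z5))^2 = X1f p1 p2 p5 K t\<close> by (metis zero_less_power)
  qed
  show "X5f a3 a4 p5 K t > 0"
  proof -
    have "z1 - z4 = P - T" unfolding P_def T_def by simp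
    have "P \<noteq> T"
    proof
      assume "P = T"
      then have "cnj E * P = cnj E * T" by simp
      then have "S1/2 = - SS4/2" unfolding zeta tau by (simp add: complex_eq_iff)
      then show False using S1p SS4nn by simp
    qed
    then have "cmod (z1 - z4) > 0" using \<open>z1 - z4 = P - T\<close> by simp
    then show ?thesis using \<open>(cmod (z1 - z4))^2 = X5f a3 a4 p5 K t\<close> by (metis zero_less_power)
  qed
  show "X3f p1 p2 a3 a4 p5 K t > 0"
  proof -
    have "z2 - z4 = Q - T" unfolding Q_def T_def by simp
    have "Q \<noteq> T"
    proof
      assume "Q = T"
      then have "cnj E * Q = cnj E * T" by simp
      then have a: "Jf p5 K p1 p2 t / (4*t) = - SS4/2" and b: "Rf p5 K p1 p2 t / (4*t) = nn4/2"
        unfolding omega tau by (simp_all add: complex_eq_iff)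
      from a have "Jf p5 K p1 p2 t / (4*t) \<le> 0" using SS4nn by simp
      then have "Jf p5 K p1 p2 t \<le> 0" using t by (simp add: divide_le_0_iff)
      with Jnn have J0: "Jf p5 K p1 p2 t = 0" by simp
      with a have "SS4 = 0" by simp
      with n4nn have "nn4 \<ge> 0" by simp
      moreover have "Rf p5 K p1 p2 t < 0" using JR J0 by simp
      then have "Rf p5 K p1 p2 t / (4*t) < 0" using t by (simp add: divide_neg_pos)
      ultimately show False using b by linarith
    qed
    then have "cmod (z2 - z4) > 0" using \<open>z2 - z4 = Q - T\<close> by simp
    then show ?thesis using \<open>(cmod (z2 - z4))^2 = X3f p1 p2 a3 a4 p5 K t\<close> by (metis zero_less_power)
  qed
qed



definition wpos :: "pentagon \<Rightarrow> bool" where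
  "wpos A \<longleftrightarrow> (\<forall>i j::5. j \<noteq> i \<and> j \<noteq> i + 1 \<longrightarrow> cross (A $ (i + 1) - A $ i) (A $ j - A $ i) \<ge> 0)"
definition wneg :: "pentagon \<Rightarrow> bool" where
  "wneg A \<longleftrightarrow> (\<forall>i j::5. j \<noteq> i \<and> j \<noteq> i + 1 \<longrightarrow> cross (A $ (i + 1) - A $ i) (A $ j - A $ i) \<le> 0)"

lemma closed_config: "closed {A::pentagon. has_sides a A \<and> (wpos A \<or> wneg A)}"
  unfolding has_sides_def wpos_def wneg_def cross_def
  by (intro closed_Collect_conj closed_Collect_disj closed_Collect_all closed_Collect_imp
      open_Collect_const closed_Collect_le closed_Collect_eq continuous_intros)

lemma MC_closure_sub: "A \<in> MC_closure a \<Longrightarrow> has_sides a A \<and> (wpos A \<or> wneg A)"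
proof -
  assume "A \<in> MC_closure a"
  moreover have "MC a \<subseteq> {A::pentagon. has_sides a A \<and> (wpos A \<or> wneg A)}"
    unfolding MC_def strictly_convex_def wpos_def wneg_def by (auto intro: less_imp_le)
  ultimately show ?thesis unfolding MC_closure_def using closure_minimal[OF _ closed_config] by blast
qed

definition cvec :: "pentagon \<Rightarrow> pentagon" where
  "cvec A = (\<chi> i. cnj (A $ i))"

lemma cvec_nth[simp]: "cvec A $ i = cnj (A $ i)"
  unfolding cvec_def by simp

lemma cross_cnj: "cross (cnj z) (cnj w) = - cross z w"
  by (simp add: cross_def)

lemma dist_cnj: "dist (cnj z) (cnj w) = dist z w"
  by (simp add: dist_norm complex_cnj_diff[symmetric] del: complex_cnj_diff)

lemma cvec_sides: "has_sides a (cvec A) = has_sides a A"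
  unfolding has_sides_def by (simp add: dist_cnj)

lemma cvec_wneg: "wneg A \<Longrightarrow> wpos (cvec A)"
  unfolding wneg_def wpos_def by (auto simp: complex_cnj_diff[symmetric] cross_cnj simp del: complex_cnj_diff)

lemma cvec_diag: "diag (cvec A) i = diag A i"
  unfolding diag_def by (simp add: dist_cnj)

lemma cvec_xdiag: "xdiag (cvec A) i = xdiag A i"
  unfolding xdiag_def cvec_diag ..

lemma cvec_energy: "energy q (cvec A) = energy q A"
  unfolding energy_def cvec_diag ..

definition "Fe a q K t = q 2 * q 5 / sqrt (X1f (a 1) (a 2) (a 5) K t) + q 1 * q 3 / sqrt t
   + q 2 * q 4 / sqrt (X3f (a 1) (a 2) (a 3) (a 4) (a 5) K t) + q 3 * q 5 / K
   + q 1 * q 4 / sqrt (X5f (a 3) (a 4) (a 5) K t)"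

lemma pent_config:
  fixes A :: pentagon
  assumes hs: "has_sides a A" and wp: "wpos A" and k: "diag A 4 = K" and kp: "K > 0"
    and tt: "xdiag A 2 = t" and d1: "DD (a 5) K t > 0" and d2: "DD (a 1) (a 2) t > 0"
  shows "energy q A = Fe a q K t"
    and "DD (a 3) (a 4) (K^2) \<ge> 0"
    and "Jf (a 5) K (a 1) (a 2) t \<ge> 0"
    and "Lc (a 5) K (a 1) (a 2) (n4 (a 3) (a 4) K) (S4 (a 3) (a 4) K) t \<ge> 0"
    and "S4 (a 3) (a 4) K = 0 \<Longrightarrow> n4 (a 3) (a 4) K \<ge> 0"
    and "X1f (a 1) (a 2) (a 5) K t > 0" and "X3f (a 1) (a 2) (a 3) (a 4) (a 5) K t > 0"
    and "X5f (a 3) (a 4) (a 5) K t > 0"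
proof -
  have s: "\<And>i. dist (A $ i) (A $ (i + 1)) = a i" using hs unfolding has_sides_def by blast
  have w: "\<And>i j. j \<noteq> i \<Longrightarrow> j \<noteq> i + 1 \<Longrightarrow> cross (A $ (i + 1) - A $ i) (A $ j - A $ i) \<ge> 0"
    using wp unfolding wpos_def by blast
  have s1: "cmod (A$1 - A$2) = a 1" using s[of 1] by (simp add: dist_norm)
  have s2: "cmod (A$2 - A$3) = a 2" using s[of 2] by (simp add: dist_norm)
  have s3: "cmod (A$3 - A$4) = a 3" using s[of 3] by (simp add: dist_norm)
  have s4: "cmod (A$4 - A$5) = a 4" using s[of 4] by (simp add: dist_norm)
  have six: "(6::5) = 1" by simp
  have five: "(5::5) = 0" by simp
  have s5: "cmod (A$5 - A$1) = a 5" using s[of 5] by (simp add: dist_norm six)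
  have kk: "cmod (A$3 - A$5) = K" using k unfolding diag_def by (simp add: dist_norm)
  have t2: "(cmod (A$1 - A$3))^2 = t" using tt unfolding xdiag_def diag_def by (simp add: dist_norm)
  have c513: "cross (A$1 - A$5) (A$3 - A$5) \<ge> 0" using w[of 3 5] by (simp add: six)
  have c123: "cross (A$2 - A$1) (A$3 - A$1) \<ge> 0" using w[of 3 1] by simp
  have c345: "cross (A$4 - A$3) (A$5 - A$3) \<ge> 0" using w[of 5 3] by simp
  have c235: "cross (A$3 - A$2) (A$5 - A$2) \<ge> 0" using w[of 5 2] by simp
  have c342: "cross (A$4 - A$3) (A$2 - A$3) \<ge> 0" using w[of 2 3] by simp
  have c341: "cross (A$4 - A$3) (A$1 - A$3) \<ge> 0" using w[of 1 3] by simp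
  note C = config[OF s1 s2 s3 s4 s5 kk kp t2 c513 c123 c345 c235 c342 c341 d1 d2]
  show "DD (a 3) (a 4) (K^2) \<ge> 0" "Jf (a 5) K (a 1) (a 2) t \<ge> 0"
    "Lc (a 5) K (a 1) (a 2) (n4 (a 3) (a 4) K) (S4 (a 3) (a 4) K) t \<ge> 0"
    "S4 (a 3) (a 4) K = 0 \<Longrightarrow> n4 (a 3) (a 4) K \<ge> 0"
    "X1f (a 1) (a 2) (a 5) K t > 0" "X3f (a 1) (a 2) (a 3) (a 4) (a 5) K t > 0"
    "X5f (a 3) (a 4) (a 5) K t > 0" using C by auto
  have e1: "diag A 1 = sqrt (X1f (a 1) (a 2) (a 5) K t)"
  proof -
    have "diag A 1 = cmod (A$2 - A$5)" unfolding diag_def by (simp add: dist_norm norm_minus_commute five)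
    also have "\<dots> = sqrt ((cmod (A$2 - A$5))^2)" by simp
    finally show ?thesis using C(1) by simp
  qed
  have e2: "diag A 2 = sqrt t"
  proof -
    have "diag A 2 = cmod (A$1 - A$3)" unfolding diag_def by (simp add: dist_norm)
    also have "\<dots> = sqrt ((cmod (A$1 - A$3))^2)" by simp
    finally show ?thesis using t2 by simp
  qed
  have e3: "diag A 3 = sqrt (X3f (a 1) (a 2) (a 3) (a 4) (a 5) K t)"
  proof -
    have "diag A 3 = cmod (A$2 - A$4)" unfolding diag_def by (simp add: dist_norm)
    also have "\<dots> = sqrt ((cmod (A$2 - A$4))^2)" by simp
    finally show ?thesis using C(2) by simp
  qed
  have e5: "diag A 5 = sqrt (X5f (a 3) (a 4) (a 5) K t)"
  proof -
    have "diag A 5 = cmod (A$1 - A$4)" unfolding diag_def by (simp add: dist_norm norm_minus_commute six)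
    also have "\<dots> = sqrt ((cmod (A$1 - A$4))^2)" by simp
    finally show ?thesis using C(3) by simp
  qed
  show "energy q A = Fe a q K t" unfolding energy_def Fe_def e1 e2 e3 e5 k ..
qed

lemma pent_config_any:
  fixes A :: pentagon
  assumes hs: "has_sides a A" and wp: "wpos A \<or> wneg A" and k: "diag A 4 = K" and kp: "K > 0"
    and tt: "xdiag A 2 = t" and d1: "DD (a 5) K t > 0" and d2: "DD (a 1) (a 2) t > 0"
  shows "energy q A = Fe a q K t"
    and "DD (a 3) (a 4) (K^2) \<ge> 0"
    and "Jf (a 5) K (a 1) (a 2) t \<ge> 0"
    and "Lc (a 5) K (a 1) (a 2) (n4 (a 3) (a 4) K) (S4 (a 3) (a 4) K) t \<ge> 0"
    and "S4 (a 3) (a 4) K = 0 \<Longrightarrow> n4 (a 3) (a 4) K \<ge> 0"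
    and "X1f (a 1) (a 2) (a 5) K t > 0" and "X3f (a 1) (a 2) (a 3) (a 4) (a 5) K t > 0"
    and "X5f (a 3) (a 4) (a 5) K t > 0"
proof -
  obtain B where hB: "has_sides a B" "wpos B" "diag B 4 = K" "xdiag B 2 = t" "energy q B = energy q A"
  proof (cases "wpos A")
    case True then show ?thesis using that hs k tt by blast
  next
    case False
    then have "wneg A" using wp by blast
    then show ?thesis using that[of "cvec A"] hs k tt
      by (simp add: cvec_sides cvec_wneg cvec_diag cvec_xdiag cvec_energy)
  qed
  note C = pent_config[OF hB(1) hB(2) hB(3) kp hB(4) d1 d2]
  show "energy q A = Fe a q K t" using C(1) hB(5) by simp
  show "DD (a 3) (a 4) (K^2) \<ge> 0" "Jf (a 5) K (a 1) (a 2) t \<ge> 0"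
    "Lc (a 5) K (a 1) (a 2) (n4 (a 3) (a 4) K) (S4 (a 3) (a 4) K) t \<ge> 0"
    "S4 (a 3) (a 4) K = 0 \<Longrightarrow> n4 (a 3) (a 4) K \<ge> 0"
    "X1f (a 1) (a 2) (a 5) K t > 0" "X3f (a 1) (a 2) (a 3) (a 4) (a 5) K t > 0"
    "X5f (a 3) (a 4) (a 5) K t > 0" using C by auto
qed

lemma pent_dd:
  fixes A :: pentagon
  assumes hs: "has_sides a A"
  shows "DD (a 5) (diag A 4) (xdiag A 2) \<ge> 0" and "DD (a 1) (a 2) (xdiag A 2) \<ge> 0"
    and "diag A 4 = 0 \<Longrightarrow> xdiag A 2 = (a 5)^2"
proof -
  have s: "\<And>i. dist (A $ i) (A $ (i + 1)) = a i" using hs unfolding has_sides_def by blast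
  have six: "(6::5) = 1" by simp
  define E where "E = A$5 - A$3"
  define P where "P = A$1 - A$3"
  define Q where "Q = A$2 - A$3"
  define K where "K = diag A 4"
  define t where "t = xdiag A 2"
  have cE: "cmod E = K" unfolding E_def K_def diag_def by (simp add: dist_norm norm_minus_commute)
  have cP: "(cmod P)^2 = t" unfolding P_def t_def xdiag_def diag_def by (simp add: dist_norm)
  have cQ: "cmod Q = a 2" unfolding Q_def using s[of 2] by (simp add: dist_norm)
  have cPE: "cmod (P - E) = a 5" unfolding P_def E_def using s[of 5] by (simp add: dist_norm six norm_minus_commute)
  have cQP: "cmod (Q - P) = a 1" unfolding P_def Q_def using s[of 1] by (simp add: dist_norm norm_minus_commute)
  have "DD K (a 5) t \<ge> 0"
  proof (rule DD_nonneg_of)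
    show "Re (cnj E * P) = mm K (a 5) t / 2"
      using cmod_diff_sq[of P E] cPE cP cE unfolding mm_def by simp
    show "(cmod (cnj E * P))^2 = K^2 * t" using cE cP by (simp add: norm_mult power_mult_distrib)
  qed
  then show "DD (a 5) (diag A 4) (xdiag A 2) \<ge> 0" unfolding K_def t_def by (simp add: DD_sym)
  have "DD (a 2) (a 1) t \<ge> 0"
  proof (rule DD_nonneg_of)
    show "Re (cnj P * Q) = mm (a 2) (a 1) t / 2"
      using cmod_diff_sq[of Q P] cQP cP cQ unfolding mm_def by simp
    show "(cmod (cnj P * Q))^2 = (a 2)^2 * t" using cQ cP by (simp add: norm_mult power_mult_distrib)
  qed
  then show "DD (a 1) (a 2) (xdiag A 2) \<ge> 0" unfolding t_def by (simp add: DD_sym)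
  assume "diag A 4 = 0"
  then have "E = 0" using cE unfolding K_def by simp
  then show "xdiag A 2 = (a 5)^2" using cPE cP unfolding t_def by simp
qed

lemma interior_DD:
  assumes "t0 \<in> interior S" and "\<And>t. t \<in> S \<Longrightarrow> DD x y t \<ge> 0"
  shows "DD x y t0 > 0"
proof (rule ccontr)
  assume "\<not> DD x y t0 > 0"
  moreover have "t0 \<in> S" using assms(1) interior_subset by blast
  ultimately have z: "DD x y t0 = 0" using assms(2) by force
  obtain e where e: "e > 0" "ball t0 e \<subseteq> S" using assms(1) mem_interior by blast
  define l where "l = x^2 + y^2 - t0"
  define h where "h = (if l \<ge> 0 then - e/2 else e/2)"
  have hb: "t0 + h \<in> ball t0 e" using e unfolding h_def by (simp add: dist_real_def)
  have "DD x y (t0 + h) = DD x y t0 + 2*l*h - h^2"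
    unfolding DD_def mm_def l_def by (simp add: algebra_simps power2_eq_square)
  also have "\<dots> < 0"
  proof -
    have "l*h \<le> 0" unfolding h_def using e by (auto simp: mult_nonneg_nonpos mult_nonpos_nonneg)
    moreover have "h^2 > 0" unfolding h_def using e by auto
    ultimately show ?thesis using z by linarith
  qed
  finally show False using assms(2) hb e(2) by force
qed



lemma DD_t_pos: "DD x y t > 0 \<Longrightarrow> t > 0"
proof -
  assume "DD x y t > 0"
  then have "4*x^2*t > (mm x y t)^2" unfolding DD_def by simp
  then have "x^2 * t > 0" using zero_le_power2[of "mm x y t"] by linarith
  then show ?thesis by (simp add: zero_less_mult_iff)
qed

theorem lemma7:
  fixes a q :: "5 \<Rightarrow> real" and k :: real
  assumes "\<forall>i. a i > 0" and "\<forall>i. q i > 0"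
  shows "\<exists>f1. \<forall>t \<in> slice_param_interior a k.
           (slice_energy a q k has_real_derivative f1 t) (at t)
         \<and> (\<exists>d > 0. (f1 has_real_derivative d) (at t))"
proof -
  define I where "I = (\<lambda>A. xdiag A 2) ` slice a k"
  define U where "U = slice_param_interior a k"
  have U: "U = interior I" unfolding U_def I_def slice_param_interior_def ..
  have oU: "open U" unfolding U by simp
  have UI: "\<And>s. s \<in> U \<Longrightarrow> s \<in> I" unfolding U using interior_subset by blast
  have slice_props: "\<And>A. A \<in> slice a k \<Longrightarrow> has_sides a A \<and> (wpos A \<or> wneg A) \<and> diag A 4 = k"
    unfolding slice_def using MC_closure_sub by blast
  have Idd: "\<And>s. s \<in> I \<Longrightarrow> DD (a 5) k s \<ge> 0 \<and> DD (a 1) (a 2) s \<ge> 0"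
  proof -
    fix s assume "s \<in> I"
    then obtain A where A: "A \<in> slice a k" and sA: "s = xdiag A 2" unfolding I_def by blast
    have h: "has_sides a A" and dk: "diag A 4 = k" using slice_props[OF A] by auto
    show "DD (a 5) k s \<ge> 0 \<and> DD (a 1) (a 2) s \<ge> 0"
      using pent_dd(1,2)[OF h] unfolding dk sA by simp
  qed
  have kpos: "U \<noteq> {} \<Longrightarrow> k > 0"
  proof -
    assume ne: "U \<noteq> {}"
    then obtain s where "s \<in> I" using UI by blast
    then obtain A where A: "A \<in> slice a k" by (auto simp: I_def)
    have "k \<ge> 0" using slice_props[OF A] unfolding diag_def by auto
    moreover have "k \<noteq> 0"
    proof
      assume k0: "k = 0"
      have "I \<subseteq> {(a 5)^2}"
      proof
        fix s assume "s \<in> I"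
        then obtain A where A: "A \<in> slice a k" and sA: "s = xdiag A 2" unfolding I_def by blast
        have h: "has_sides a A" and dk: "diag A 4 = k" using slice_props[OF A] by auto
        show "s \<in> {(a 5)^2}" using pent_dd(3)[OF h] dk k0 sA by simp
      qed
      then have "interior I = {}" using interior_mono[of I "{(a 5)^2}"] by simp
      then show False using ne U by simp
    qed
    ultimately show ?thesis by simp
  qed
  have d1: "\<And>s. s \<in> U \<Longrightarrow> DD (a 5) k s > 0"
    using interior_DD[of _ I "a 5" k] Idd U by blast
  have d2: "\<And>s. s \<in> U \<Longrightarrow> DD (a 1) (a 2) s > 0"
    using interior_DD[of _ I "a 1" "a 2"] Idd U by blast
  have tp: "\<And>s. s \<in> U \<Longrightarrow> s > 0" using d1 DD_t_pos by blast
  define As where "As s = (SOME A. A \<in> slice a k \<and> xdiag A 2 = s)" for s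
  have As: "\<And>s. s \<in> U \<Longrightarrow> As s \<in> slice a k \<and> xdiag (As s) 2 = s"
  proof -
    fix s assume "s \<in> U"
    then have "\<exists>A. A \<in> slice a k \<and> xdiag A 2 = s" using UI unfolding I_def by auto
    then show "As s \<in> slice a k \<and> xdiag (As s) 2 = s" unfolding As_def by (rule someI_ex)
  qed
  have PC: "\<And>s. s \<in> U \<Longrightarrow>
      energy q (As s) = Fe a q k s
    \<and> DD (a 3) (a 4) (k^2) \<ge> 0
    \<and> Jf (a 5) k (a 1) (a 2) s \<ge> 0
    \<and> Lc (a 5) k (a 1) (a 2) (n4 (a 3) (a 4) k) (S4 (a 3) (a 4) k) s \<ge> 0
    \<and> (S4 (a 3) (a 4) k = 0 \<longrightarrow> n4 (a 3) (a 4) k \<ge> 0)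
    \<and> X1f (a 1) (a 2) (a 5) k s > 0 \<and> X3f (a 1) (a 2) (a 3) (a 4) (a 5) k s > 0
    \<and> X5f (a 3) (a 4) (a 5) k s > 0"
  proof -
    fix s assume s: "s \<in> U"
    then have k: "k > 0" using kpos by blast
    have A: "As s \<in> slice a k" "xdiag (As s) 2 = s" using As[OF s] by auto
    note P = slice_props[OF A(1)]
    note C = pent_config_any[OF conjunct1[OF P] conjunct1[OF conjunct2[OF P]]
        conjunct2[OF conjunct2[OF P]] k A(2) d1[OF s] d2[OF s]]
    show "?thesis s" using C by auto
  qed
  have SE: "\<And>s. s \<in> U \<Longrightarrow> slice_energy a q k s = Fe a q k s"
  proof -
    fix s assume s: "s \<in> U"
    have "slice_energy a q k s = energy q (As s)" unfolding slice_energy_def As_def ..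
    also have "\<dots> = Fe a q k s" using PC[OF s] by blast
    finally show "slice_energy a q k s = Fe a q k s" .
  qed
  define f1 where "f1 s =
      (- (q 2 * q 5) * X1d (a 1) (a 2) (a 5) k s / (2 * X1f (a 1) (a 2) (a 5) k s * sqrt (X1f (a 1) (a 2) (a 5) k s)))
    + (- (q 1 * q 3) * 1 / (2 * s * sqrt s))
    + (- (q 2 * q 4) * X3d (a 1) (a 2) (a 3) (a 4) (a 5) k s / (2 * X3f (a 1) (a 2) (a 3) (a 4) (a 5) k s * sqrt (X3f (a 1) (a 2) (a 3) (a 4) (a 5) k s)))
    + 0
    + (- (q 1 * q 4) * X5d (a 3) (a 4) (a 5) k s / (2 * X5f (a 3) (a 4) (a 5) k s * sqrt (X5f (a 3) (a 4) (a 5) k s)))" for s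
  have Fd: "\<And>s. s \<in> U \<Longrightarrow> (Fe a q k has_real_derivative f1 s) (at s)"
  proof -
    fix s assume s: "s \<in> U"
    note P = PC[OF s]
    have X1p: "X1f (a 1) (a 2) (a 5) k s > 0" using P by blast
    have X3p: "X3f (a 1) (a 2) (a 3) (a 4) (a 5) k s > 0" using P by blast
    have X5p: "X5f (a 3) (a 4) (a 5) k s > 0" using P by blast
    have D1: "((\<lambda>s. q 2 * q 5 / sqrt (X1f (a 1) (a 2) (a 5) k s)) has_real_derivative
        - (q 2 * q 5) * X1d (a 1) (a 2) (a 5) k s / (2 * X1f (a 1) (a 2) (a 5) k s * sqrt (X1f (a 1) (a 2) (a 5) k s))) (at s)"
      by (rule term1_deriv[OF X1_deriv[OF tp[OF s] d1[OF s] d2[OF s]] X1p])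
    have D2: "((\<lambda>s. q 1 * q 3 / sqrt s) has_real_derivative - (q 1 * q 3) * 1 / (2 * s * sqrt s)) (at s)"
      using term1_deriv[where X="\<lambda>s. s", OF DERIV_ident, of s "q 1 * q 3"] tp[OF s] by simp
    have D3: "((\<lambda>s. q 2 * q 4 / sqrt (X3f (a 1) (a 2) (a 3) (a 4) (a 5) k s)) has_real_derivative
        - (q 2 * q 4) * X3d (a 1) (a 2) (a 3) (a 4) (a 5) k s / (2 * X3f (a 1) (a 2) (a 3) (a 4) (a 5) k s * sqrt (X3f (a 1) (a 2) (a 3) (a 4) (a 5) k s))) (at s)"
      by (rule term1_deriv[OF X3_deriv[OF tp[OF s] d1[OF s] d2[OF s]] X3p])
    have D5: "((\<lambda>s. q 1 * q 4 / sqrt (X5f (a 3) (a 4) (a 5) k s)) has_real_derivative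
        - (q 1 * q 4) * X5d (a 3) (a 4) (a 5) k s / (2 * X5f (a 3) (a 4) (a 5) k s * sqrt (X5f (a 3) (a 4) (a 5) k s))) (at s)"
      by (rule term1_deriv[OF X5_deriv[OF tp[OF s] d1[OF s] d2[OF s]] X5p])
    have D4: "((\<lambda>s. q 3 * q 5 / k) has_real_derivative 0) (at s)" by (rule DERIV_const)
    have "((\<lambda>s. q 2 * q 5 / sqrt (X1f (a 1) (a 2) (a 5) k s) + q 1 * q 3 / sqrt s
   + q 2 * q 4 / sqrt (X3f (a 1) (a 2) (a 3) (a 4) (a 5) k s) + q 3 * q 5 / k
   + q 1 * q 4 / sqrt (X5f (a 3) (a 4) (a 5) k s)) has_real_derivative f1 s) (at s)"
      unfolding f1_def by (rule DERIV_add[OF DERIV_add[OF DERIV_add[OF DERIV_add[OF D1 D2] D3] D4] D5])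
    then show "(Fe a q k has_real_derivative f1 s) (at s)" unfolding Fe_def[abs_def] .
  qed
  show ?thesis
  proof (intro exI[of _ f1] ballI conjI)
    fix t assume t: "t \<in> slice_param_interior a k"
    then have tU: "t \<in> U" unfolding U_def .
    show "(slice_energy a q k has_real_derivative f1 t) (at t)"
      by (rule has_field_derivative_transform_within_open[OF Fd[OF tU] oU tU]) (simp add: SE)
    note P = PC[OF tU]
    have t0: "t > 0" using tp[OF tU] .
    have qp: "\<And>i. q i > 0" using assms(2) by blast
    define d where "d =
        (q 2 * q 5) * (3 * (X1d (a 1) (a 2) (a 5) k t)^2 / (4 * (X1f (a 1) (a 2) (a 5) k t)^2 * sqrt (X1f (a 1) (a 2) (a 5) k t))
           - X1dd (a 1) (a 2) (a 5) k t / (2 * X1f (a 1) (a 2) (a 5) k t * sqrt (X1f (a 1) (a 2) (a 5) k t)))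
      + (q 1 * q 3) * (3 * 1^2 / (4 * t^2 * sqrt t) - 0 / (2 * t * sqrt t))
      + (q 2 * q 4) * (3 * (X3d (a 1) (a 2) (a 3) (a 4) (a 5) k t)^2 / (4 * (X3f (a 1) (a 2) (a 3) (a 4) (a 5) k t)^2 * sqrt (X3f (a 1) (a 2) (a 3) (a 4) (a 5) k t))
           - X3dd (a 1) (a 2) (a 3) (a 4) (a 5) k t / (2 * X3f (a 1) (a 2) (a 3) (a 4) (a 5) k t * sqrt (X3f (a 1) (a 2) (a 3) (a 4) (a 5) k t)))
      + 0
      + (q 1 * q 4) * (3 * (X5d (a 3) (a 4) (a 5) k t)^2 / (4 * (X5f (a 3) (a 4) (a 5) k t)^2 * sqrt (X5f (a 3) (a 4) (a 5) k t))
           - X5dd (a 3) (a 4) (a 5) k t / (2 * X5f (a 3) (a 4) (a 5) k t * sqrt (X5f (a 3) (a 4) (a 5) k t)))"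
    have X1p: "X1f (a 1) (a 2) (a 5) k t > 0" using P by blast
    have X3p: "X3f (a 1) (a 2) (a 3) (a 4) (a 5) k t > 0" using P by blast
    have X5p: "X5f (a 3) (a 4) (a 5) k t > 0" using P by blast
    note dd1 = d1[OF tU] and dd2 = d2[OF tU]
    have E1: "((\<lambda>s. - (q 2 * q 5) * X1d (a 1) (a 2) (a 5) k s / (2 * X1f (a 1) (a 2) (a 5) k s * sqrt (X1f (a 1) (a 2) (a 5) k s))) has_real_derivative
        (q 2 * q 5) * (3 * (X1d (a 1) (a 2) (a 5) k t)^2 / (4 * (X1f (a 1) (a 2) (a 5) k t)^2 * sqrt (X1f (a 1) (a 2) (a 5) k t))
           - X1dd (a 1) (a 2) (a 5) k t / (2 * X1f (a 1) (a 2) (a 5) k t * sqrt (X1f (a 1) (a 2) (a 5) k t)))) (at t)"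
      by (rule term2_deriv[OF X1_deriv[OF t0 dd1 dd2] X1d_deriv[OF t0 dd1 dd2] X1p])
    have E2: "((\<lambda>s. - (q 1 * q 3) * 1 / (2 * s * sqrt s)) has_real_derivative
        (q 1 * q 3) * (3 * 1^2 / (4 * t^2 * sqrt t) - 0 / (2 * t * sqrt t))) (at t)"
      using term2_deriv[where X="\<lambda>s. s" and X'="\<lambda>s. 1" and c="q 1 * q 3" and t=t, OF DERIV_ident DERIV_const] t0
      by simp
    have E3: "((\<lambda>s. - (q 2 * q 4) * X3d (a 1) (a 2) (a 3) (a 4) (a 5) k s / (2 * X3f (a 1) (a 2) (a 3) (a 4) (a 5) k s * sqrt (X3f (a 1) (a 2) (a 3) (a 4) (a 5) k s))) has_real_derivative
        (q 2 * q 4) * (3 * (X3d (a 1) (a 2) (a 3) (a 4) (a 5) k t)^2 / (4 * (X3f (a 1) (a 2) (a 3) (a 4) (a 5) k t)^2 * sqrt (X3f (a 1) (a 2) (a 3) (a 4) (a 5) k t))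
           - X3dd (a 1) (a 2) (a 3) (a 4) (a 5) k t / (2 * X3f (a 1) (a 2) (a 3) (a 4) (a 5) k t * sqrt (X3f (a 1) (a 2) (a 3) (a 4) (a 5) k t)))) (at t)"
      by (rule term2_deriv[OF X3_deriv[OF t0 dd1 dd2] X3d_deriv[OF t0 dd1 dd2] X3p])
    have E5: "((\<lambda>s. - (q 1 * q 4) * X5d (a 3) (a 4) (a 5) k s / (2 * X5f (a 3) (a 4) (a 5) k s * sqrt (X5f (a 3) (a 4) (a 5) k s))) has_real_derivative
        (q 1 * q 4) * (3 * (X5d (a 3) (a 4) (a 5) k t)^2 / (4 * (X5f (a 3) (a 4) (a 5) k t)^2 * sqrt (X5f (a 3) (a 4) (a 5) k t))
           - X5dd (a 3) (a 4) (a 5) k t / (2 * X5f (a 3) (a 4) (a 5) k t * sqrt (X5f (a 3) (a 4) (a 5) k t)))) (at t)"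
      by (rule term2_deriv[OF X5_deriv[OF t0 dd1 dd2] X5d_deriv[OF t0 dd1 dd2] X5p])
    have E4: "((\<lambda>s. 0::real) has_real_derivative 0) (at t)" by (rule DERIV_const)
    have "(f1 has_real_derivative d) (at t)"
      unfolding f1_def[abs_def] d_def
      by (rule DERIV_add[OF DERIV_add[OF DERIV_add[OF DERIV_add[OF E1 E2] E3] E4] E5])
    moreover have "d > 0"
    proof -
      have x1: "X1dd (a 1) (a 2) (a 5) k t \<le> 0"
        by (rule X1dd_nonpos[OF t0 d1[OF tU] d2[OF tU]]) (use P in simp)
      have x3: "X3dd (a 1) (a 2) (a 3) (a 4) (a 5) k t \<le> 0"
        by (rule X3dd_nonpos[OF t0 d1[OF tU] d2[OF tU]]) (use P in auto)
      have x5: "X5dd (a 3) (a 4) (a 5) k t \<le> 0"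
        by (rule X5dd_nonpos[OF t0 d1[OF tU] d2[OF tU]]) (use P in simp)
      have T1: "(q 2 * q 5) * (3 * (X1d (a 1) (a 2) (a 5) k t)^2 / (4 * (X1f (a 1) (a 2) (a 5) k t)^2 * sqrt (X1f (a 1) (a 2) (a 5) k t))
           - X1dd (a 1) (a 2) (a 5) k t / (2 * X1f (a 1) (a 2) (a 5) k t * sqrt (X1f (a 1) (a 2) (a 5) k t))) \<ge> 0"
        by (rule term2_nonneg) (use qp x1 P in \<open>auto intro: less_imp_le\<close>)
      have T3: "(q 2 * q 4) * (3 * (X3d (a 1) (a 2) (a 3) (a 4) (a 5) k t)^2 / (4 * (X3f (a 1) (a 2) (a 3) (a 4) (a 5) k t)^2 * sqrt (X3f (a 1) (a 2) (a 3) (a 4) (a 5) k t))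
           - X3dd (a 1) (a 2) (a 3) (a 4) (a 5) k t / (2 * X3f (a 1) (a 2) (a 3) (a 4) (a 5) k t * sqrt (X3f (a 1) (a 2) (a 3) (a 4) (a 5) k t))) \<ge> 0"
        by (rule term2_nonneg) (use qp x3 P in \<open>auto intro: less_imp_le\<close>)
      have T5: "(q 1 * q 4) * (3 * (X5d (a 3) (a 4) (a 5) k t)^2 / (4 * (X5f (a 3) (a 4) (a 5) k t)^2 * sqrt (X5f (a 3) (a 4) (a 5) k t))
           - X5dd (a 3) (a 4) (a 5) k t / (2 * X5f (a 3) (a 4) (a 5) k t * sqrt (X5f (a 3) (a 4) (a 5) k t))) \<ge> 0"
        by (rule term2_nonneg) (use qp x5 P in \<open>auto intro: less_imp_le\<close>)
      have T2: "(q 1 * q 3) * (3 * 1^2 / (4 * t^2 * sqrt t) - 0 / (2 * t * sqrt t)) > 0"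
        using qp t0 by simp
      show ?thesis unfolding d_def using T1 T2 T3 T5 by linarith
    qed
    ultimately show "\<exists>d > 0. (f1 has_real_derivative d) (at t)" by blast
  qed
qed


end
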